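(* Let $G$ and $H$ be finite simple graphs and $m,n$ positive integers. The direct product ${\sf M}_m(G)\times{\sf M}_n(H)$ is a cover graph if and only if $G$ or $H$ is bipartite.
   Context: A graph is a cover graph if it is the underlying (undirected) graph of the Hasse diagram of some finite partially ordered set. The direct product $G \times H$ has vertex set $V(G)\times V(H)$, with $(g_i,h_s)$ adjacent to $(g_j,h_t)$ if and only if $g_ig_j \in E(G)$ and $h_sh_t \in E(H)$. For a graph $G$ with vertex set $V_0=\{\langle 0,j\rangle : 0\le j\le N-1\}$ and edge set $E_0$, and $m>0$, the generalized Mycielskian ${\sf M}_m(G)$ has vertex set $V_0\cup V_1\cup\cdots\cup V_m\cup\{u\}$ where $V_i=\{\langle i,j\rangle: 0\le j\le N-1\}$, and edge set $E_0\cup E_1\cup\cdots\cup E_m\cup\{\langle m,j\rangle u: 0\le j\le N-1\}$, where $E_i=\{\langle i-1,j\rangle\langle i,k\rangle : \langle 0,j\rangle\langle 0,k\rangle\in E_0\}$ for $1\le i\le m$. *)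

theory Defs
  imports Main
begin

definition simple_graph :: "'a set \<Rightarrow> ('a \<Rightarrow> 'a \<Rightarrow> bool) \<Rightarrow> bool" where
  "simple_graph V E \<longleftrightarrow> finite V \<and> (\<forall>u v. E u v \<longrightarrow> u \<in> V \<and> v \<in> V)
     \<and> (\<forall>u v. E u v \<longrightarrow> E v u) \<and> (\<forall>u. \<not> E u u)"

definition bipartite :: "'a set \<Rightarrow> ('a \<Rightarrow> 'a \<Rightarrow> bool) \<Rightarrow> bool" where
  "bipartite V E \<longleftrightarrow> (\<exists>c :: 'a \<Rightarrow> bool. \<forall>u\<in>V. \<forall>v\<in>V. E u v \<longrightarrow> c u \<noteq> c v)"

definition covers :: "'a set \<Rightarrow> 'a rel \<Rightarrow> 'a \<Rightarrow> 'a \<Rightarrow> bool" where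
  "covers V r x y \<longleftrightarrow> (x, y) \<in> r \<and> x \<noteq> y \<and>
     \<not> (\<exists>w\<in>V. (x, w) \<in> r \<and> (w, y) \<in> r \<and> w \<noteq> x \<and> w \<noteq> y)"

definition cover_graph :: "'a set \<Rightarrow> ('a \<Rightarrow> 'a \<Rightarrow> bool) \<Rightarrow> bool" where
  "cover_graph V E \<longleftrightarrow> finite V \<and> (\<exists>r. partial_order_on V r \<and>
     (\<forall>u\<in>V. \<forall>v\<in>V. E u v \<longleftrightarrow> covers V r u v \<or> covers V r v u))"

definition dprod_verts :: "'a set \<Rightarrow> 'b set \<Rightarrow> ('a \<times> 'b) set" where
  "dprod_verts V W = V \<times> W"

definition dprod_edges ::
  "('a \<Rightarrow> 'a \<Rightarrow> bool) \<Rightarrow> ('b \<Rightarrow> 'b \<Rightarrow> bool) \<Rightarrow> ('a \<times> 'b) \<Rightarrow> ('a \<times> 'b) \<Rightarrow> bool" where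
  "dprod_edges E F p q \<longleftrightarrow> E (fst p) (fst q) \<and> F (snd p) (snd q)"

text \<open>Generalized Mycielskian M_m(G). Vertex \<langle>i,j\<rangle> (0 \<le> i \<le> m, j a vertex
of G) is represented as Some (j, i); the apex u is None.\<close>
definition myc_verts :: "nat \<Rightarrow> 'a set \<Rightarrow> ('a \<times> nat) option set" where
  "myc_verts m V = {Some (v, i) | v i. v \<in> V \<and> i \<le> m} \<union> {None}"

definition myc_edges :: "nat \<Rightarrow> 'a set \<Rightarrow> ('a \<Rightarrow> 'a \<Rightarrow> bool)
     \<Rightarrow> ('a \<times> nat) option \<Rightarrow> ('a \<times> nat) option \<Rightarrow> bool" where
  "myc_edges m V E x y \<longleftrightarrow>
     (\<exists>v w. x = Some (v, 0) \<and> y = Some (w, 0) \<and> E v w)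
   \<or> (\<exists>v w i. 1 \<le> i \<and> i \<le> m \<and> E v w \<and>
        ((x = Some (v, i - 1) \<and> y = Some (w, i)) \<or> (y = Some (v, i - 1) \<and> x = Some (w, i))))
   \<or> (\<exists>v. v \<in> V \<and> ((x = Some (v, m) \<and> y = None) \<or> (y = Some (v, m) \<and> x = None)))"

end

theory Submission
  imports Defs
begin


lemma cover_from_orient:
  fixes V :: "'v set" and E D :: "'v \<Rightarrow> 'v \<Rightarrow> bool" and \<pi> :: "'v \<Rightarrow> nat"
  assumes fin: "finite V"
   and DE: "\<And>x y. D x y \<Longrightarrow> E x y"
   and EV: "\<And>x y. E x y \<Longrightarrow> x \<in> V \<and> y \<in> V"
   and ED: "\<And>x y. E x y \<Longrightarrow> D x y \<or> D y x"
   and Esym: "\<And>x y. E x y \<Longrightarrow> E y x"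
   and inc: "\<And>x y. D x y \<Longrightarrow> \<pi> x < \<pi> y"
   and le2: "\<And>x y. D x y \<Longrightarrow> \<pi> y \<le> \<pi> x + 2"
   and nos: "\<And>x y z. D x z \<Longrightarrow> D z y \<Longrightarrow> D x y \<Longrightarrow> False"
  shows "cover_graph V E"
proof -
  define R where "R = {(x,y). D x y}"
  define r where "r = {(a,b). a \<in> V \<and> b \<in> V \<and> (a,b) \<in> R\<^sup>*}"
  have mono: "a = b \<or> \<pi> a < \<pi> b" if "(a,b) \<in> R\<^sup>*" for a b
    using that by (induct rule: rtrancl_induct) (auto simp: R_def dest: inc)
  have stepL: "\<exists>c. D a c \<and> (c,b) \<in> R\<^sup>*" if "(a,b) \<in> R\<^sup>*" "a \<noteq> b" for a b
    using that by (cases rule: converse_rtranclE) (auto simp: R_def)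
  have stepR: "\<exists>c. (a,c) \<in> R\<^sup>* \<and> D c b" if "(a,b) \<in> R\<^sup>*" "a \<noteq> b" for a b
    using that by (cases rule: rtranclE) (auto simp: R_def)
  have anti: "x = y" if "(x,y) \<in> R\<^sup>*" "(y,x) \<in> R\<^sup>*" for x y
    using mono[OF that(1)] mono[OF that(2)] by auto
  have po: "partial_order_on V r"
    unfolding partial_order_on_def preorder_on_def refl_on_def antisym_def trans_def r_def
    using anti by (auto intro: rtrancl_trans)
  have cov: "covers V r x y" if "D x y" for x y
  proof -
    have xy: "x \<in> V" "y \<in> V" using EV[OF DE[OF that]] by auto
    have "(x,y) \<in> r" using xy that by (auto simp: r_def R_def)
    moreover have "x \<noteq> y" using inc[OF that] by auto
    moreover have "\<not> (\<exists>w\<in>V. (x, w) \<in> r \<and> (w, y) \<in> r \<and> w \<noteq> x \<and> w \<noteq> y)"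
    proof
      assume "\<exists>w\<in>V. (x, w) \<in> r \<and> (w, y) \<in> r \<and> w \<noteq> x \<and> w \<noteq> y"
      then obtain w where w: "(x,w) \<in> R\<^sup>*" "(w,y) \<in> R\<^sup>*" "w \<noteq> x" "w \<noteq> y"
        by (auto simp: r_def)
      obtain c where c: "D x c" "(c,w) \<in> R\<^sup>*" using stepL[OF w(1)] w(3) by auto
      obtain d where d: "(w,d) \<in> R\<^sup>*" "D d y" using stepR[OF w(2)] w(4) by auto
      have 1: "\<pi> c \<le> \<pi> w" "\<pi> w \<le> \<pi> d" using mono[OF c(2)] mono[OF d(1)] by auto
      have 2: "\<pi> x < \<pi> c" "\<pi> d < \<pi> y" "\<pi> y \<le> \<pi> x + 2" using inc[OF c(1)] inc[OF d(2)] le2[OF that] by auto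
      have "c = w" using mono[OF c(2)] 1 2 by auto
      moreover have "d = w" using mono[OF d(1)] 1 2 by auto
      ultimately show False using nos c(1) d(2) that by blast
    qed
    ultimately show ?thesis unfolding covers_def by blast
  qed
  have cov2: "E x y" if "covers V r x y" for x y
  proof -
    from that have xy: "(x,y) \<in> R\<^sup>*" "x \<noteq> y" "x \<in> V" "y \<in> V"
      and nw: "\<not> (\<exists>w\<in>V. (x, w) \<in> r \<and> (w, y) \<in> r \<and> w \<noteq> x \<and> w \<noteq> y)"
      by (auto simp: covers_def r_def)
    obtain c where c: "D x c" "(c,y) \<in> R\<^sup>*" using stepL[OF xy(1,2)] by auto
    show ?thesis
    proof (cases "c = y")
      case True thus ?thesis using c DE by auto
    next
      case False
      have cV: "c \<in> V" using EV[OF DE[OF c(1)]] by auto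
      have "(x,c) \<in> r" "(c,y) \<in> r" using c cV xy by (auto simp: r_def R_def)
      moreover have "c \<noteq> x" using inc[OF c(1)] by auto
      ultimately show ?thesis using nw cV False by blast
    qed
  qed
  show ?thesis unfolding cover_graph_def
  proof (intro conjI exI[of _ r] po ballI iffI)
    fix u v assume "u \<in> V" "v \<in> V" "E u v"
    thus "covers V r u v \<or> covers V r v u" using ED[of u v] cov by blast
  next
    fix u v assume "u \<in> V" "v \<in> V" "covers V r u v \<or> covers V r v u"
    thus "E u v" using cov2[of u v] cov2[of v u] Esym[of v u] by blast
  qed (rule fin)
qed



definition rk :: "('a \<Rightarrow> bool) \<Rightarrow> nat \<Rightarrow> ('a \<times> nat) option \<Rightarrow> nat" where
  "rk c m x = (case x of None \<Rightarrow> 2*m+2 | Some (v,i) \<Rightarrow> 2*i + (if i = 0 \<and> c v then 1 else 0))"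

lemma myc_edgesE:
  assumes "myc_edges m V E x y"
  obtains (L0) v w where "x = Some (v,0)" "y = Some (w,0)" "E v w"
    | (Up) v w i where "1 \<le> i" "i \<le> m" "E v w" "x = Some (v, i - 1)" "y = Some (w, i)"
    | (Dn) v w i where "1 \<le> i" "i \<le> m" "E v w" "y = Some (v, i - 1)" "x = Some (w, i)"
    | (Ap1) v where "v \<in> V" "x = Some (v,m)" "y = None"
    | (Ap2) v where "v \<in> V" "y = Some (v,m)" "x = None"
  using assms unfolding myc_edges_def by blast

lemma myc_sym:
  assumes "simple_graph V E" "myc_edges m V E x y" shows "myc_edges m V E y x"
  using assms unfolding myc_edges_def simple_graph_def by blast

lemma myc_EV:
  assumes "simple_graph V E" "myc_edges m V E x y" shows "x \<in> myc_verts m V \<and> y \<in> myc_verts m V"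
  using assms(2)
proof (cases rule: myc_edgesE)
qed (use assms(1) in \<open>auto simp: simple_graph_def myc_verts_def\<close>)

lemma myc_rk:
  assumes sg: "simple_graph V E" and c: "\<forall>u\<in>V. \<forall>v\<in>V. E u v \<longrightarrow> c u \<noteq> c v" and m: "0 < m"
    and e: "myc_edges m V E x y"
  shows "rk c m x \<noteq> rk c m y \<and> rk c m y \<le> rk c m x + 2 \<and> rk c m x \<le> rk c m y + 2"
  using e
proof (cases rule: myc_edgesE)
  case (L0 v w)
  then have "v \<in> V" "w \<in> V" using sg by (auto simp: simple_graph_def)
  then show ?thesis using L0 c by (auto simp: rk_def)
next
  case (Up v w i) then show ?thesis by (auto simp: rk_def)
next
  case (Dn v w i) then show ?thesis by (auto simp: rk_def)
next
  case (Ap1 v) then show ?thesis using m by (auto simp: rk_def)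
next
  case (Ap2 v) then show ?thesis using m by (auto simp: rk_def)
qed


lemma rk_cases:
  "rk c m x = 0 \<Longrightarrow> \<exists>v. x = Some (v,0) \<and> \<not> c v"
  "rk c m x = 1 \<Longrightarrow> \<exists>v. x = Some (v,0) \<and> c v"
  "rk c m x = 2 \<Longrightarrow> 0 < m \<Longrightarrow> \<exists>v. x = Some (v,1)"
  "odd (rk c m x) \<Longrightarrow> rk c m x = 1"
  by (cases x; auto simp: rk_def split: if_splits)+

lemma myc_01:
  assumes "simple_graph V E" "myc_edges m V E (Some (v,0)) (Some (w, Suc 0)) \<or> myc_edges m V E (Some (w, Suc 0)) (Some (v,0))"
  shows "E v w"
  using assms unfolding myc_edges_def simple_graph_def by auto

lemma myc_nos:
  assumes sg: "simple_graph V E" and c: "\<forall>u\<in>V. \<forall>v\<in>V. E u v \<longrightarrow> c u \<noteq> c v" and m: "0 < m"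
    and e2: "myc_edges m V E z y" and e3: "myc_edges m V E x y"
    and r: "rk c m x < rk c m z" "rk c m z < rk c m y"
  shows False
proof -
  have "rk c m y \<le> rk c m x + 2" using myc_rk[OF sg c m e3] by auto
  hence rz: "rk c m z = rk c m x + 1" "rk c m y = rk c m x + 2" using r by auto
  show False
  proof (cases "odd (rk c m x)")
    case True
    then have "rk c m x = 1" by (rule rk_cases(4))
    moreover have "odd (rk c m y)" using True rz by auto
    then have "rk c m y = 1" by (rule rk_cases(4))
    ultimately show False using rz by auto
  next
    case False
    then have "odd (rk c m z)" using rz by auto
    then have z1: "rk c m z = 1" by (rule rk_cases(4))
    obtain v where v: "x = Some (v,0)" "\<not> c v" using rk_cases(1)[of c m x] z1 rz by auto
    obtain v' where v': "z = Some (v',0)" "c v'" using rk_cases(2)[OF z1] by auto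
    obtain w where w: "y = Some (w,1)" using rk_cases(3)[of c m y] z1 rz m by auto
    have "E v w" using myc_01[OF sg] e3 v w by auto
    moreover have "E v' w" using myc_01[OF sg] e2 v' w by auto
    moreover have "v \<in> V" "w \<in> V" "v' \<in> V" using calculation sg by (auto simp: simple_graph_def)
    ultimately show False using c v v' by metis
  qed
qed



lemma myc_finite: "finite V \<Longrightarrow> finite (myc_verts m V)"
proof -
  assume "finite V"
  have "myc_verts m V = (\<lambda>(v,i). Some (v,i)) ` (V \<times> {..m}) \<union> {None}"
    unfolding myc_verts_def by auto
  thus ?thesis using \<open>finite V\<close> by simp
qed

lemma cover_left:
  assumes sg: "simple_graph VG EG" and bp: "bipartite VG EG" and m: "0 < m"
    and sh: "simple_graph VH EH"
  shows "cover_graph (dprod_verts (myc_verts m VG) (myc_verts n VH))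
           (dprod_edges (myc_edges m VG EG) (myc_edges n VH EH))"
proof -
  obtain c :: "_ \<Rightarrow> bool" where c: "\<forall>u\<in>VG. \<forall>v\<in>VG. EG u v \<longrightarrow> c u \<noteq> c v" using bp unfolding bipartite_def by blast
  let ?A = "myc_edges m VG EG" and ?B = "myc_edges n VH EH"
  define D where "D p q \<longleftrightarrow> ?A (fst p) (fst q) \<and> rk c m (fst p) < rk c m (fst q) \<and> ?B (snd p) (snd q)" for p q
  show ?thesis
  proof (rule cover_from_orient[where D = D and \<pi> = "\<lambda>p. rk c m (fst p)"])
    show "finite (dprod_verts (myc_verts m VG) (myc_verts n VH))"
      using sg sh myc_finite unfolding dprod_verts_def simple_graph_def by (meson finite_SigmaI)
  next
    fix x y assume "D x y" thus "dprod_edges ?A ?B x y" by (simp add: D_def dprod_edges_def)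
  next
    fix x y assume "dprod_edges ?A ?B x y"
    thus "x \<in> dprod_verts (myc_verts m VG) (myc_verts n VH) \<and> y \<in> dprod_verts (myc_verts m VG) (myc_verts n VH)"
      using myc_EV[OF sg] myc_EV[OF sh] by (auto simp: dprod_edges_def dprod_verts_def mem_Times_iff)
  next
    fix x y assume e: "dprod_edges ?A ?B x y"
    hence "?A (fst x) (fst y)" "?B (snd x) (snd y)" by (auto simp: dprod_edges_def)
    moreover have "?A (fst y) (fst x)" "?B (snd y) (snd x)"
      using calculation myc_sym[OF sg] myc_sym[OF sh] by auto
    moreover have "rk c m (fst x) \<noteq> rk c m (fst y)" using myc_rk[OF sg c m] calculation by blast
    ultimately show "D x y \<or> D y x" unfolding D_def by (meson linorder_neqE_nat)
  next
    fix x y assume e: "dprod_edges ?A ?B x y"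
    thus "dprod_edges ?A ?B y x"
      using myc_sym[OF sg] myc_sym[OF sh] by (auto simp: dprod_edges_def)
  next
    fix x y assume "D x y" thus "rk c m (fst x) < rk c m (fst y)" by (simp add: D_def)
  next
    fix x y assume "D x y" thus "rk c m (fst y) \<le> rk c m (fst x) + 2"
      using myc_rk[OF sg c m] by (auto simp: D_def)
  next
    fix x y z assume "D x z" "D z y" "D x y"
    thus False using myc_nos[OF sg c m] by (auto simp: D_def)
  qed
qed

lemma cover_right:
  assumes sg: "simple_graph VH EH" and bp: "bipartite VH EH" and n: "0 < n"
    and sh: "simple_graph VG EG"
  shows "cover_graph (dprod_verts (myc_verts m VG) (myc_verts n VH))
           (dprod_edges (myc_edges m VG EG) (myc_edges n VH EH))"
proof -
  obtain c :: "_ \<Rightarrow> bool" where c: "\<forall>u\<in>VH. \<forall>v\<in>VH. EH u v \<longrightarrow> c u \<noteq> c v" using bp unfolding bipartite_def by blast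
  let ?A = "myc_edges m VG EG" and ?B = "myc_edges n VH EH"
  define D where "D p q \<longleftrightarrow> ?B (snd p) (snd q) \<and> rk c n (snd p) < rk c n (snd q) \<and> ?A (fst p) (fst q)" for p q
  show ?thesis
  proof (rule cover_from_orient[where D = D and \<pi> = "\<lambda>p. rk c n (snd p)"])
    show "finite (dprod_verts (myc_verts m VG) (myc_verts n VH))"
      using sg sh myc_finite unfolding dprod_verts_def simple_graph_def by (meson finite_SigmaI)
  next
    fix x y assume "D x y" thus "dprod_edges ?A ?B x y" by (simp add: D_def dprod_edges_def)
  next
    fix x y assume "dprod_edges ?A ?B x y"
    thus "x \<in> dprod_verts (myc_verts m VG) (myc_verts n VH) \<and> y \<in> dprod_verts (myc_verts m VG) (myc_verts n VH)"
      using myc_EV[OF sg] myc_EV[OF sh] by (auto simp: dprod_edges_def dprod_verts_def mem_Times_iff)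
  next
    fix x y assume e: "dprod_edges ?A ?B x y"
    hence "?A (fst x) (fst y)" "?B (snd x) (snd y)" by (auto simp: dprod_edges_def)
    moreover have "?A (fst y) (fst x)" "?B (snd y) (snd x)"
      using calculation myc_sym[OF sg] myc_sym[OF sh] by auto
    moreover have "rk c n (snd x) \<noteq> rk c n (snd y)" using myc_rk[OF sg c n] calculation by blast
    ultimately show "D x y \<or> D y x" unfolding D_def by (meson linorder_neqE_nat)
  next
    fix x y assume e: "dprod_edges ?A ?B x y"
    thus "dprod_edges ?A ?B y x"
      using myc_sym[OF sg] myc_sym[OF sh] by (auto simp: dprod_edges_def)
  next
    fix x y assume "D x y" thus "rk c n (snd x) < rk c n (snd y)" by (simp add: D_def)
  next
    fix x y assume "D x y" thus "rk c n (snd y) \<le> rk c n (snd x) + 2"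
      using myc_rk[OF sg c n] by (auto simp: D_def)
  next
    fix x y z assume "D x z" "D z y" "D x y"
    thus False using myc_nos[OF sg c n] by (auto simp: D_def)
  qed
qed



inductive walkE :: "('v \<Rightarrow> 'v \<Rightarrow> bool) \<Rightarrow> 'v \<Rightarrow> 'v \<Rightarrow> nat \<Rightarrow> bool" for E where
  W0: "walkE E a a 0"
| WS: "walkE E a b n \<Longrightarrow> E b c \<Longrightarrow> walkE E a c (Suc n)"

lemma walk0: "walkE E a b 0 \<Longrightarrow> a = b"
  by (erule walkE.cases) auto

lemma walk_cons: "walkE E b c n \<Longrightarrow> E a b \<Longrightarrow> walkE E a c (Suc n)"
  by (induct rule: walkE.induct) (auto intro: walkE.intros)

lemma walk_app: "walkE E b c k \<Longrightarrow> walkE E a b n \<Longrightarrow> walkE E a c (n + k)"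
  by (induct rule: walkE.induct) (auto intro: walkE.intros)

lemma walk_rev: "walkE E a b n \<Longrightarrow> (\<And>x y. E x y \<Longrightarrow> E y x) \<Longrightarrow> walkE E b a n"
  by (induct rule: walkE.induct) (auto intro: walkE.intros walk_cons)

lemma walk_first: "walkE E a c k \<Longrightarrow> k = Suc n \<Longrightarrow> \<exists>b. E a b \<and> walkE E b c n"
proof (induct arbitrary: n rule: walkE.induct)
  case (W0 a) thus ?case by simp
next
  case (WS a b k c)
  show ?case
  proof (cases n)
    case 0
    then have "a = b" using WS walk0 by auto
    thus ?thesis using WS 0 by (auto intro: walkE.intros)
  next
    case (Suc n')
    then obtain b' where "E a b'" "walkE E b' b n'" using WS by auto
    thus ?thesis using WS Suc by (auto intro: walkE.intros)
  qed
qed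

lemma walk_last: "walkE E a c (Suc n) \<Longrightarrow> \<exists>b. walkE E a b n \<and> E b c"
  by (erule walkE.cases) auto

lemma walk_pow: "walkE E a a n \<Longrightarrow> walkE E a a (n * k)"
proof (induct k)
  case 0 thus ?case by (auto intro: walkE.intros)
next
  case (Suc k) thus ?case using walk_app[of E a a "n*k" a n] by (simp add: add.commute)
qed

lemma walk_prod: "walkE E a a' n \<Longrightarrow> walkE F b b' n \<Longrightarrow>
   walkE (\<lambda>p q. E (fst p) (fst q) \<and> F (snd p) (snd q)) (a,b) (a',b') n"
proof (induct arbitrary: b' rule: walkE.induct)
  case (W0 a) thus ?case using walk0[of F b b'] by (auto intro: walkE.intros)
next
  case (WS a x n c)
  obtain y where "walkE F b y n" "F y b'" using walk_last[OF WS(4)] by auto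
  thus ?case using WS by (auto intro: walkE.intros(2)[where b = "(x,y)"])
qed

lemma nonbip_odd:
  assumes sg: "simple_graph V E" and nb: "\<not> bipartite V E"
  shows "\<exists>a n. walkE E a a n \<and> odd n"
proof (rule ccontr)
  assume no: "\<not> (\<exists>a n. walkE E a a n \<and> odd n)"
  have sym: "\<And>x y. E x y \<Longrightarrow> E y x" using sg by (auto simp: simple_graph_def)
  define f where "f v = (SOME x. \<exists>n. walkE E x v n)" for v
  define c where "c v \<longleftrightarrow> (\<exists>n. even n \<and> walkE E (f v) v n)" for v
  have reach: "\<exists>n. walkE E (f v) v n" for v
    unfolding f_def by (rule someI[of _ v]) (auto intro: walkE.intros)
  have feq: "f u = f v" if "E u v" for u v
  proof -
    have "(\<lambda>x. \<exists>n. walkE E x u n) = (\<lambda>x. \<exists>n. walkE E x v n)"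
    proof (rule ext, rule iffI)
      fix x assume "\<exists>n. walkE E x u n" thus "\<exists>n. walkE E x v n" using that by (auto intro: walkE.intros)
    next
      fix x assume "\<exists>n. walkE E x v n" thus "\<exists>n. walkE E x u n" using sym[OF that] by (auto intro: walkE.intros)
    qed
    thus ?thesis unfolding f_def by simp
  qed
  have "bipartite V E" unfolding bipartite_def
  proof (intro exI[of _ c] ballI impI notI)
    fix u v assume uv: "u \<in> V" "v \<in> V" "E u v" "c u = c v"
    have fv: "f v = f u" using feq[OF uv(3)] by simp
    obtain n1 where n1: "walkE E (f u) u n1" "c u \<longleftrightarrow> even n1"
      using reach[of u] c_def by (cases "c u") auto
    obtain n2 where n2: "walkE E (f u) v n2" "c v \<longleftrightarrow> even n2"
      using reach[of v] c_def fv by (cases "c v") auto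
    have "walkE E (f u) v (Suc n1)" using n1 uv by (auto intro: walkE.intros)
    moreover have "walkE E v (f u) n2" using walk_rev[OF n2(1)] sym by blast
    ultimately have "walkE E (f u) (f u) (Suc n1 + n2)" using walk_app[of E v "f u" n2 "f u" "Suc n1"] by blast
    moreover have "odd (Suc n1 + n2)" using n1 n2 uv by auto
    ultimately show False using no by blast
  qed
  thus False using nb by simp
qed



definition ov :: "'v rel \<Rightarrow> 'v \<Rightarrow> 'v \<Rightarrow> int" where
  "ov r x y = (if (x,y) \<in> r then 1 else -1)"

lemma ov_odd: "odd (ov r x y)" by (simp add: ov_def)

locale covctx =
  fixes V :: "'v set" and E :: "'v \<Rightarrow> 'v \<Rightarrow> bool" and r :: "'v rel"
  assumes po: "partial_order_on V r"
    and cg: "\<forall>u\<in>V. \<forall>v\<in>V. E u v \<longleftrightarrow> covers V r u v \<or> covers V r v u"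
begin

lemma tr: "(a,b) \<in> r \<Longrightarrow> (b,c) \<in> r \<Longrightarrow> (a,c) \<in> r"
  using po unfolding partial_order_on_def preorder_on_def trans_def by blast

lemma an: "(a,b) \<in> r \<Longrightarrow> (b,a) \<in> r \<Longrightarrow> a = b"
  using po unfolding partial_order_on_def antisym_def by blast

lemma edge:
  assumes "x \<in> V" "y \<in> V" "E x y"
  shows "x \<noteq> y" "(x,y) \<in> r \<or> (y,x) \<in> r" "(x,y) \<in> r \<Longrightarrow> covers V r x y"
    "(x,y) \<in> r \<Longrightarrow> (y,x) \<notin> r"
proof -
  have c: "covers V r x y \<or> covers V r y x" using cg assms by blast
  thus "x \<noteq> y" "(x,y) \<in> r \<or> (y,x) \<in> r" unfolding covers_def by auto
  thus "(x,y) \<in> r \<Longrightarrow> (y,x) \<notin> r" using an by blast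
  assume "(x,y) \<in> r"
  thus "covers V r x y" using c \<open>x \<noteq> y\<close> an unfolding covers_def by blast
qed

lemma esym: "x \<in> V \<Longrightarrow> y \<in> V \<Longrightarrow> E x y \<Longrightarrow> E y x"
  using cg by blast

lemma ov_anti:
  assumes "x \<in> V" "y \<in> V" "E x y"
  shows "ov r y x = - ov r x y"
  using edge[OF assms] by (auto simp: ov_def)

lemma no3:
  assumes "covers V r a d" "b \<in> V" "b \<noteq> a" "b \<noteq> d" "(a,b) \<in> r" "(b,c) \<in> r" "(c,d) \<in> r"
  shows False
proof -
  have "(b,d) \<in> r" using tr assms by blast
  thus False using assms unfolding covers_def by blast
qed

lemma four:
  assumes V: "x1 \<in> V" "x2 \<in> V" "x3 \<in> V" "x4 \<in> V"
    and e: "E x1 x2" "E x2 x3" "E x3 x4" "E x4 x1"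
  shows "ov r x1 x2 + ov r x2 x3 + ov r x3 x4 + ov r x4 x1 = 0"
proof (cases "x1 = x3 \<or> x2 = x4")
  case True
  thus ?thesis
  proof
    assume "x1 = x3"
    thus ?thesis using ov_anti[OF V(1,2) e(1)] ov_anti[OF V(4,1) e(4)] by simp
  next
    assume "x2 = x4"
    thus ?thesis using ov_anti[OF V(1,2) e(1)] ov_anti[OF V(2,3) e(2)] by simp
  qed
next
  case False
  have d: "x1 \<noteq> x2" "x2 \<noteq> x3" "x3 \<noteq> x4" "x4 \<noteq> x1" using edge(1)[OF V(1,2) e(1)] edge(1)[OF V(2,3) e(2)] edge(1)[OF V(3,4) e(3)] edge(1)[OF V(4,1) e(4)] by auto
  note E12 = edge[OF V(1,2) e(1)] and E23 = edge[OF V(2,3) e(2)]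
    and E34 = edge[OF V(3,4) e(3)] and E41 = edge[OF V(4,1) e(4)]
  have c4: False if "(a,b) \<in> r" "(b,c) \<in> r" "(c,d) \<in> r" "(d,a) \<in> r" "a \<noteq> b" for a b c d
  proof -
    have "(b,a) \<in> r" using that tr by blast
    thus False using that an by blast
  qed
  let ?f1 = "(x1,x2) \<in> r" and ?f2 = "(x2,x3) \<in> r" and ?f3 = "(x3,x4) \<in> r" and ?f4 = "(x4,x1) \<in> r"
  have r1: "\<not> ?f1 \<Longrightarrow> (x2,x1) \<in> r \<and> covers V r x2 x1" using E12(2) edge(3)[OF V(2,1) esym[OF V(1,2) e(1)]] by blast
  have r2: "\<not> ?f2 \<Longrightarrow> (x3,x2) \<in> r \<and> covers V r x3 x2" using E23(2) edge(3)[OF V(3,2) esym[OF V(2,3) e(2)]] by blast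
  have r3: "\<not> ?f3 \<Longrightarrow> (x4,x3) \<in> r \<and> covers V r x4 x3" using E34(2) edge(3)[OF V(4,3) esym[OF V(3,4) e(3)]] by blast
  have r4: "\<not> ?f4 \<Longrightarrow> (x1,x4) \<in> r \<and> covers V r x1 x4" using E41(2) edge(3)[OF V(1,4) esym[OF V(4,1) e(4)]] by blast
  have b1: "\<not> (?f1 \<and> ?f2 \<and> ?f3 \<and> ?f4)" using c4[of x1 x2 x3 x4] d by blast
  have b2: "\<not> (\<not>?f1 \<and> \<not>?f2 \<and> \<not>?f3 \<and> \<not>?f4)" using c4[of x1 x4 x3 x2] r1 r2 r3 r4 d by blast
  have b3: "\<not> (?f1 \<and> ?f2 \<and> ?f3 \<and> \<not>?f4)" using no3[of x1 x4 x2 x3] r4 d False V by blast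
  have b4: "\<not> (?f2 \<and> ?f3 \<and> ?f4 \<and> \<not>?f1)" using no3[of x2 x1 x3 x4] r1 d False V by blast
  have b5: "\<not> (?f3 \<and> ?f4 \<and> ?f1 \<and> \<not>?f2)" using no3[of x3 x2 x4 x1] r2 d False V by blast
  have b6: "\<not> (?f4 \<and> ?f1 \<and> ?f2 \<and> \<not>?f3)" using no3[of x4 x3 x1 x2] r3 d False V by blast
  have b7: "\<not> (\<not>?f1 \<and> \<not>?f2 \<and> \<not>?f3 \<and> ?f4)" using no3[of x4 x1 x3 x2] r1 r2 r3 d False V E12(3) E23(3) E34(3) E41(3) by blast
  have b8: "\<not> (\<not>?f2 \<and> \<not>?f3 \<and> \<not>?f4 \<and> ?f1)" using no3[of x1 x2 x4 x3] r2 r3 r4 d False V E12(3) E23(3) E34(3) E41(3) by blast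
  have b9: "\<not> (\<not>?f3 \<and> \<not>?f4 \<and> \<not>?f1 \<and> ?f2)" using no3[of x2 x3 x1 x4] r3 r4 r1 d False V E12(3) E23(3) E34(3) E41(3) by blast
  have b10: "\<not> (\<not>?f4 \<and> \<not>?f1 \<and> \<not>?f2 \<and> ?f3)" using no3[of x3 x4 x2 x1] r4 r1 r2 d False V E12(3) E23(3) E34(3) E41(3) by blast
  show ?thesis unfolding ov_def
    using b1 b2 b3 b4 b5 b6 b7 b8 b9 b10
    by (cases ?f1; cases ?f2; cases ?f3; cases ?f4) simp_all
qed

end



primrec psi :: "('k \<Rightarrow> int) \<Rightarrow> (nat \<Rightarrow> 'k \<Rightarrow> 'k \<Rightarrow> int) \<Rightarrow> nat \<Rightarrow> ('k \<Rightarrow> 'k) \<Rightarrow> nat \<Rightarrow> 'k \<Rightarrow> int" where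
  "psi T D k nb 0 b = T b"
| "psi T D k nb (Suc j) b = D (k - Suc j) (nb b) b + psi T D k nb j (nb b)"

lemma abstract_contra:
  fixes EK :: "'k \<Rightarrow> 'k \<Rightarrow> bool" and T :: "'k \<Rightarrow> int" and D :: "nat \<Rightarrow> 'k \<Rightarrow> 'k \<Rightarrow> int"
    and L :: "'k \<Rightarrow> 'k \<Rightarrow> int" and k :: nat
  assumes sym: "\<And>a b. EK a b \<Longrightarrow> EK b a"
  and k: "0 < k"
  and Todd: "\<And>a b. EK a b \<Longrightarrow> odd (T a)"
  and Dodd: "\<And>i a b. EK a b \<Longrightarrow> odd (D i a b)"
  and Lodd: "\<And>a b. EK a b \<Longrightarrow> odd (L a b)"
  and Lanti: "\<And>a b. EK a b \<Longrightarrow> L b a = - L a b"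
  and P1: "\<And>a b c. EK a b \<Longrightarrow> EK c b \<Longrightarrow> D (k-1) a b - D (k-1) c b = T c - T a"
  and P2: "\<And>i a b c. Suc i < k \<Longrightarrow> EK a b \<Longrightarrow> EK c b \<Longrightarrow>
             D i a b - D i c b = D (Suc i) b c - D (Suc i) b a"
  and P3: "\<And>a b c. EK a b \<Longrightarrow> EK c b \<Longrightarrow> L a b + L b c = D 0 b c - D 0 b a"
  and W: "walkE EK a a p" "odd p"
  shows False
proof -
  define nb where "nb b = (SOME a. EK a b)" for b
  have nbE: "EK (nb b) b" if "EK a b" for a b
    unfolding nb_def using that by (rule someI)
  let ?psi = "psi T D k nb"
  have C1: "j < k \<Longrightarrow> EK a b \<Longrightarrow> D (k - Suc j) a b = ?psi (Suc j) b - ?psi j a" for j a b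
  proof (induct j arbitrary: a b)
    case 0
    have "EK (nb b) b" using nbE[OF 0(2)] .
    thus ?case using P1[OF 0(2), of "nb b"] by simp
  next
    case (Suc j)
    let ?c = "nb b"
    have cb: "EK ?c b" using nbE[OF Suc(3)] .
    have i: "Suc (k - Suc (Suc j)) = k - Suc j" using Suc(2) by simp
    have "D (k - Suc (Suc j)) a b - D (k - Suc (Suc j)) ?c b
          = D (k - Suc j) b ?c - D (k - Suc j) b a"
      using P2[of "k - Suc (Suc j)" a b ?c] Suc(2,3) cb i by simp
    moreover have "D (k - Suc j) b ?c = ?psi (Suc j) ?c - ?psi j b"
      using Suc(1)[of b ?c] Suc(2) sym[OF cb] by simp
    moreover have "D (k - Suc j) b a = ?psi (Suc j) a - ?psi j b"
      using Suc(1)[of b a] Suc(2) sym[OF Suc(3)] by simp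
    ultimately show ?case by simp
  qed
  have C2: "j \<le> k \<Longrightarrow> EK x b \<Longrightarrow> EK y b' \<Longrightarrow> even (?psi j b - ?psi j b')" for j x y b b'
  proof (induct j arbitrary: x y b b')
    case 0
    have "odd (T b)" "odd (T b')" using Todd sym 0 by blast+
    thus ?case by simp
  next
    case (Suc j)
    have e1: "EK (nb b) b" "EK (nb b') b'" using nbE Suc by blast+
    have "even (?psi j (nb b) - ?psi j (nb b'))"
      using Suc(1)[OF _ sym[OF e1(1)] sym[OF e1(2)]] Suc(2) by simp
    moreover have "odd (D (k - Suc j) (nb b) b)" "odd (D (k - Suc j) (nb b') b')" using Dodd e1 by blast+
    ultimately show ?case by simp
  qed
  let ?phi = "?psi k"
  have D0: "EK a b \<Longrightarrow> D 0 a b = ?phi b - ?psi (k-1) a" for a b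
    using C1[of "k-1" a b] k by simp
  define e where "e a b = L a b + ?phi a - ?phi b" for a b
  have E1: "EK a b \<Longrightarrow> EK c b \<Longrightarrow> e a b = e c b" for a b c
  proof -
    assume ab: "EK a b" and cb: "EK c b"
    have "L a b + L b c = ?phi c - ?phi a"
      using P3[OF ab cb] D0[OF sym[OF ab]] D0[OF sym[OF cb]] by simp
    moreover have "L b c = - L c b" using Lanti[OF cb] .
    ultimately show ?thesis unfolding e_def by simp
  qed
  have E2: "EK a b \<Longrightarrow> e b a = - e a b" for a b
    using Lanti unfolding e_def by simp
  obtain p' where p': "p = Suc p'" using W(2) by (cases p) auto
  obtain w1 where w1: "EK a w1" "walkE EK w1 a p'" using walk_first[OF W(1) p'] by auto
  have alt: "walkE EK w1 x j \<Longrightarrow> \<exists>y. EK y x \<and> e y x = (-1)^j * e a w1" for x j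
  proof (induct j arbitrary: x)
    case 0 thus ?case using w1 walk0[OF 0] by auto
  next
    case (Suc n c)
    obtain b where b: "walkE EK w1 b n" "EK b c" using walk_last[OF Suc(2)] by auto
    then obtain y where y: "EK y b" "e y b = (-1)^n * e a w1" using Suc(1) by blast
    have "e b c = - e c b" using E2[OF b(2)] by simp
    moreover have "e c b = e y b" using E1[OF sym[OF b(2)] y(1)] .
    ultimately show ?case using b(2) y by auto
  qed
  obtain y where y: "EK y a" "e y a = (-1)^p' * e a w1" using alt[OF w1(2)] by auto
  have "even p'" using W(2) p' by simp
  hence "e y a = e a w1" using y by simp
  moreover have "e y a = e w1 a" using E1[OF y(1) sym[OF w1(1)]] .
  moreover have "e w1 a = - e a w1" using E2[OF w1(1)] .
  ultimately have "e a w1 = 0" by simp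
  hence "L a w1 = ?phi w1 - ?phi a" unfolding e_def by simp
  moreover have "even (?phi w1 - ?phi a)" using C2[of k a w1 w1 a] w1(1) sym[OF w1(1)] by simp
  moreover have "odd (L a w1)" using Lodd[OF w1(1)] .
  ultimately show False by simp
qed



lemma myc_step:
  assumes "simple_graph V E" "E g g'" "i < k" "m \<le> k"
  shows "myc_edges m V E (Some (g, Suc i + m - k)) (Some (g', i + m - k))"
proof (cases "k \<le> i + m")
  case True
  have "E g' g" using assms by (auto simp: simple_graph_def)
  moreover have "1 \<le> Suc (i + m - k)" "Suc (i + m - k) \<le> m" using True assms by auto
  moreover have "Suc i + m - k = Suc (i + m - k)" "Suc (i+m-k) - 1 = i + m - k" using True by auto
  ultimately show ?thesis unfolding myc_edges_def
    by (intro disjI2 disjI1 exI[of _ g'] exI[of _ g] exI[of _ "Suc (i + m - k)"]) auto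
next
  case False
  hence "Suc i + m - k = 0" "i + m - k = 0" using assms by auto
  thus ?thesis using assms(2) unfolding myc_edges_def by auto
qed

lemma myc_top: "g \<in> V \<Longrightarrow> myc_edges m V E None (Some (g, m))"
  unfolding myc_edges_def by auto

lemma myc_bot: "m \<le> k \<Longrightarrow> E g g' \<Longrightarrow> myc_edges m V E (Some (g, 0 + m - k)) (Some (g', 0 + m - k))"
  unfolding myc_edges_def by auto


lemma cover_imp_bip:
  fixes VG :: "'a set" and VH :: "'b set"
  assumes sg: "simple_graph VG EG" and sh: "simple_graph VH EH" and m: "0 < m" and n: "0 < n"
    and cov: "cover_graph (dprod_verts (myc_verts m VG) (myc_verts n VH))
           (dprod_edges (myc_edges m VG EG) (myc_edges n VH EH))"
  shows "bipartite VG EG \<or> bipartite VH EH"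
proof (rule ccontr)
  assume "\<not> (bipartite VG EG \<or> bipartite VH EH)"
  then obtain a p b q where wa: "walkE EG a a p" "odd p" and wb: "walkE EH b b q" "odd q"
    using nonbip_odd[OF sg] nonbip_odd[OF sh] by blast
  define PV where "PV = dprod_verts (myc_verts m VG) (myc_verts n VH)"
  define PE where "PE = dprod_edges (myc_edges m VG EG) (myc_edges n VH EH)"
  obtain r where po: "partial_order_on PV r"
    and cg: "\<forall>u\<in>PV. \<forall>v\<in>PV. PE u v \<longleftrightarrow> covers PV r u v \<or> covers PV r v u"
    using cov unfolding cover_graph_def PV_def PE_def by blast
  interpret covctx PV PE r using po cg by unfold_locales
  define EK where "EK x y \<longleftrightarrow> EG (fst x) (fst y) \<and> EH (snd x) (snd y)" for x y :: "'a \<times> 'b"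
  define k where "k = max m n"
  have k: "0 < k" "m \<le> k" "n \<le> k" using m unfolding k_def by auto
  define Vx :: "nat \<Rightarrow> 'a \<times> 'b \<Rightarrow> ('a \<times> nat) option \<times> ('b \<times> nat) option"
    where "Vx i x = (Some (fst x, i + m - k), Some (snd x, i + n - k))" for i x
  define Ap :: "('a \<times> nat) option \<times> ('b \<times> nat) option" where "Ap = (None, None)"
  have symK: "EK x y \<Longrightarrow> EK y x" for x y using sg sh unfolding EK_def simple_graph_def by blast
  have inV: "EK x y \<Longrightarrow> i \<le> k \<Longrightarrow> Vx i x \<in> PV" for x y i
    using sg sh k unfolding EK_def simple_graph_def Vx_def PV_def dprod_verts_def myc_verts_def by auto
  have inV': "EK x y \<Longrightarrow> i \<le> k \<Longrightarrow> Vx i y \<in> PV" for x y i using inV symK by blast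
  have ApV: "Ap \<in> PV" unfolding Ap_def PV_def dprod_verts_def myc_verts_def by auto
  have eTop: "EK x y \<Longrightarrow> PE Ap (Vx k x)" for x y
  proof -
    assume "EK x y"
    hence "fst x \<in> VG" "snd x \<in> VH" using sg sh unfolding EK_def simple_graph_def by auto
    thus ?thesis using myc_top[of "fst x" VG m EG] myc_top[of "snd x" VH n EH] k
      unfolding Vx_def PE_def dprod_edges_def Ap_def by auto
  qed
  have eStep: "EK x y \<Longrightarrow> i < k \<Longrightarrow> PE (Vx (Suc i) x) (Vx i y)" for x y i
    using myc_step[OF sg, of "fst x" "fst y" i k m] myc_step[OF sh, of "snd x" "snd y" i k n] k
    unfolding EK_def Vx_def PE_def dprod_edges_def by auto
  have eBot: "EK x y \<Longrightarrow> PE (Vx 0 x) (Vx 0 y)" for x y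
    using myc_bot[of m k EG "fst x" "fst y" VG] myc_bot[of n k EH "snd x" "snd y" VH] k
    unfolding EK_def Vx_def PE_def dprod_edges_def by auto
  have PEsym: "PE x y \<Longrightarrow> PE y x" for x y
    using myc_sym[OF sg] myc_sym[OF sh] unfolding PE_def dprod_edges_def by auto
  have PEV: "PE x y \<Longrightarrow> x \<in> PV \<and> y \<in> PV" for x y
    using myc_EV[OF sg] myc_EV[OF sh] unfolding PE_def PV_def dprod_edges_def dprod_verts_def
    by (auto simp: mem_Times_iff)
  have anti: "PE x y \<Longrightarrow> ov r y x = - ov r x y" for x y
    using ov_anti PEV by blast
  define T where "T x = ov r Ap (Vx k x)" for x
  define D where "D i x y = ov r (Vx (Suc i) x) (Vx i y)" for i x y
  define L where "L x y = ov r (Vx 0 x) (Vx 0 y)" for x y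
  have Vk: "Vx (Suc (k - 1)) = Vx k" using k by simp
  have fourP: "PE x1 x2 \<Longrightarrow> PE x2 x3 \<Longrightarrow> PE x3 x4 \<Longrightarrow> PE x4 x1 \<Longrightarrow>
     ov r x1 x2 + ov r x2 x3 + ov r x3 x4 + ov r x4 x1 = 0" for x1 x2 x3 x4
    using four PEV by blast
  show False
  proof (rule abstract_contra[where EK = EK and T = T and D = D and L = L and k = k])
    show "EK x y \<Longrightarrow> EK y x" for x y by (rule symK)
    show "0 < k" using k by simp
    show "odd (T x)" for x unfolding T_def by (rule ov_odd)
    show "odd (D i x y)" for i x y unfolding D_def by (rule ov_odd)
    show "odd (L x y)" for x y unfolding L_def by (rule ov_odd)
    show "EK x y \<Longrightarrow> L y x = - L x y" for x y unfolding L_def using anti eBot by blast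
  next
    fix x y z assume xy: "EK x y" and zy: "EK z y"
    have e1: "PE Ap (Vx k x)" using eTop[OF xy] .
    have e2: "PE (Vx k x) (Vx (k-1) y)" using eStep[OF xy, of "k-1"] Vk k by simp
    have e3': "PE (Vx k z) (Vx (k-1) y)" using eStep[OF zy, of "k-1"] Vk k by simp
    have e4': "PE Ap (Vx k z)" using eTop[OF zy] .
    have "ov r Ap (Vx k x) + ov r (Vx k x) (Vx (k-1) y) + ov r (Vx (k-1) y) (Vx k z) + ov r (Vx k z) Ap = 0"
      using fourP[OF e1 e2 PEsym[OF e3'] PEsym[OF e4']] .
    moreover have "ov r (Vx (k-1) y) (Vx k z) = - ov r (Vx k z) (Vx (k-1) y)" using anti[OF e3'] .
    moreover have "ov r (Vx k z) Ap = - ov r Ap (Vx k z)" using anti[OF e4'] .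
    ultimately show "D (k - 1) x y - D (k - 1) z y = T z - T x"
      unfolding D_def T_def using Vk by simp
  next
    fix i x y z assume i: "Suc i < k" and xy: "EK x y" and zy: "EK z y"
    have e1: "PE (Vx (Suc i) x) (Vx i y)" using eStep[OF xy] i by simp
    have e2': "PE (Vx (Suc i) z) (Vx i y)" using eStep[OF zy] i by simp
    have e3': "PE (Vx (Suc (Suc i)) y) (Vx (Suc i) z)" using eStep[OF symK[OF zy]] i by simp
    have e4: "PE (Vx (Suc (Suc i)) y) (Vx (Suc i) x)" using eStep[OF symK[OF xy]] i by simp
    have "ov r (Vx (Suc i) x) (Vx i y) + ov r (Vx i y) (Vx (Suc i) z)
        + ov r (Vx (Suc i) z) (Vx (Suc (Suc i)) y) + ov r (Vx (Suc (Suc i)) y) (Vx (Suc i) x) = 0"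
      using fourP[OF e1 PEsym[OF e2'] PEsym[OF e3'] e4] .
    moreover have "ov r (Vx i y) (Vx (Suc i) z) = - ov r (Vx (Suc i) z) (Vx i y)" using anti[OF e2'] .
    moreover have "ov r (Vx (Suc i) z) (Vx (Suc (Suc i)) y) = - ov r (Vx (Suc (Suc i)) y) (Vx (Suc i) z)"
      using anti[OF e3'] .
    ultimately show "D i x y - D i z y = D (Suc i) y z - D (Suc i) y x"
      unfolding D_def by simp
  next
    fix x y z assume xy: "EK x y" and zy: "EK z y"
    have e1: "PE (Vx 0 x) (Vx 0 y)" using eBot[OF xy] .
    have e2: "PE (Vx 0 y) (Vx 0 z)" using eBot[OF symK[OF zy]] .
    have e3': "PE (Vx (Suc 0) y) (Vx 0 z)" using eStep[OF symK[OF zy], of 0] k by simp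
    have e4: "PE (Vx (Suc 0) y) (Vx 0 x)" using eStep[OF symK[OF xy], of 0] k by simp
    have "ov r (Vx 0 x) (Vx 0 y) + ov r (Vx 0 y) (Vx 0 z) + ov r (Vx 0 z) (Vx (Suc 0) y)
         + ov r (Vx (Suc 0) y) (Vx 0 x) = 0"
      using fourP[OF e1 e2 PEsym[OF e3'] e4] .
    moreover have "ov r (Vx 0 z) (Vx (Suc 0) y) = - ov r (Vx (Suc 0) y) (Vx 0 z)" using anti[OF e3'] .
    ultimately show "L x y + L y z = D 0 y z - D 0 y x"
      unfolding D_def L_def by simp
  next
    have "walkE EG a a (p * q)" using walk_pow[OF wa(1)] .
    moreover have "walkE EH b b (p * q)" using walk_pow[OF wb(1), of p] by (simp add: mult.commute)
    ultimately show "walkE EK (a,b) (a,b) (p*q)"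
      using walk_prod[of EG a a "p*q" EH b b] unfolding EK_def[abs_def] by simp
    show "odd (p * q)" using wa wb by simp
  qed
qed


theorem theorem13:
  fixes VG :: "'a set" and EG :: "'a \<Rightarrow> 'a \<Rightarrow> bool"
    and VH :: "'b set" and EH :: "'b \<Rightarrow> 'b \<Rightarrow> bool"
    and m n :: nat
  assumes "simple_graph VG EG" and "simple_graph VH EH"
    and "0 < m" and "0 < n"
  shows "cover_graph (dprod_verts (myc_verts m VG) (myc_verts n VH))
           (dprod_edges (myc_edges m VG EG) (myc_edges n VH EH))
         \<longleftrightarrow> bipartite VG EG \<or> bipartite VH EH"
proof
  assume "cover_graph (dprod_verts (myc_verts m VG) (myc_verts n VH))
           (dprod_edges (myc_edges m VG EG) (myc_edges n VH EH))"
  thus "bipartite VG EG \<or> bipartite VH EH" using cover_imp_bip assms by blast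
next
  assume "bipartite VG EG \<or> bipartite VH EH"
  thus "cover_graph (dprod_verts (myc_verts m VG) (myc_verts n VH))
           (dprod_edges (myc_edges m VG EG) (myc_edges n VH EH))"
    using cover_left[OF assms(1) _ assms(3) assms(2)] cover_right[OF assms(2) _ assms(4) assms(1)] by blast
qed

end
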